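(* Let $W:\mathbb{M}^{d\times d}\to[0,+\infty)$ satisfy (H1)–(H5) and (H7), and let $0<\delta\le\delta_W/2$. Set $\mathcal{V}_\delta=\{F\in\mathbb{M}^{d\times d}:\mathrm{dist}(F,SO(d)\{A,B\})<\delta\}$. Then there exist a constant $C>0$ depending only on $W$, a constant $C_\delta>0$ depending additionally on $\delta$, and $\rho_\delta>0$ with $\rho_\delta\to0$ as $\delta\to0$, such that (i) $W(F+G)\le W(F)+C\sqrt{W(F)}\,|G|+\frac12D^2W(F)G:G+\rho_\delta|G|^2$ for all $F\in\mathcal{V}_\delta$ and all $G$ with $|G|<\delta$; (ii) $W(F+G)\le W(F)+C_\delta\sqrt{W(F)}\,|G|$ for all $F\in\mathbb{M}^{d\times d}\setminus\mathcal{V}_\delta$ and all $G$ with $|G|<\delta$.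
   Context: $d\ge2$, $A=\mathrm{Id}$, $B=\mathrm{diag}(1,\dots,1,1+\kappa)$, $\kappa>0$; $|\cdot|$ is the Frobenius norm. (H1) $W$ continuous; (H2) $W(RF)=W(F)$ for $R\in SO(d)$; (H3) $W(A)=W(B)=0$; (H4) $W(F)\ge c_1\mathrm{dist}^2(F,SO(d)\{A,B\})$ for some $c_1>0$; (H5) there is $\delta_W>0$ such that $W$ is $C^2$ on $\{F:\mathrm{dist}(F,SO(d)\{A,B\})<\delta_W\}$; (H7) $|W(F_1)-W(F_2)|\le c_3(1+|F_1|+|F_2|)|F_1-F_2|$ for all $F_1,F_2$. *)

theory Defs
  imports "HOL-Analysis.Analysis"
begin

definition SOd :: "(real^'d^'d) set" where
  "SOd = {R. rotation_matrix R}"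

text \<open>The well B = diag(1,...,1,1+kappa); the distinguished ("last") coordinate is k0.\<close>
definition wellB :: "real \<Rightarrow> 'd \<Rightarrow> real^'d^'d" where
  "wellB \<kappa> k0 = (\<chi> i j. if i = j then (if i = k0 then 1 + \<kappa> else 1) else 0)"

definition wells :: "real \<Rightarrow> 'd \<Rightarrow> (real^'d^'d) set" where
  "wells \<kappa> k0 = {R ** mat 1 | R. R \<in> SOd} \<union> {R ** wellB \<kappa> k0 | R. R \<in> SOd}"

definition C2_on_with ::
  "(real^'d^'d) set \<Rightarrow> (real^'d^'d \<Rightarrow> real)
   \<Rightarrow> (real^'d^'d \<Rightarrow> ((real^'d^'d) \<Rightarrow>\<^sub>L real))
   \<Rightarrow> (real^'d^'d \<Rightarrow> ((real^'d^'d) \<Rightarrow>\<^sub>L ((real^'d^'d) \<Rightarrow>\<^sub>L real))) \<Rightarrow> bool" where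
  "C2_on_with U W DW D2W \<longleftrightarrow>
     (\<forall>F\<in>U. (W has_derivative blinfun_apply (DW F)) (at F)) \<and>
     (\<forall>F\<in>U. (DW has_derivative blinfun_apply (D2W F)) (at F)) \<and>
     continuous_on U DW \<and> continuous_on U D2W"

end

theory Submission imports Defs begin

lemma orth_entry:
  fixes R :: "real^'n^'n"
  assumes "orthogonal_matrix R" shows "\<bar>R$i$k\<bar> \<le> 1"
proof -
  have "norm (row i R) = 1" using assms orthogonal_matrix_orthonormal_rows by blast
  moreover have "row i R = R$i" by (simp add: row_def vec_eq_iff)
  ultimately show ?thesis using component_le_norm_cart[of "R$i" k] by simp
qed

lemma orth_mult_bound:
  fixes R X :: "real^'n^'n"
  assumes "orthogonal_matrix R"
  shows "norm (R ** X) \<le> (\<Sum>i::'n\<in>UNIV. \<Sum>j\<in>UNIV. \<Sum>k\<in>UNIV. \<bar>X$k$j\<bar>)"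
proof -
  have "norm (R ** X) \<le> (\<Sum>i\<in>UNIV. norm ((R ** X)$i))"
    unfolding norm_vec_def by (rule L2_set_le_sum) auto
  also have "\<dots> \<le> (\<Sum>i\<in>UNIV. \<Sum>j\<in>UNIV. \<bar>(R ** X)$i$j\<bar>)"
    by (intro sum_mono norm_le_l1_cart)
  also have "\<dots> \<le> (\<Sum>i::'n\<in>UNIV. \<Sum>j\<in>UNIV. \<Sum>k\<in>UNIV. \<bar>X$k$j\<bar>)"
  proof -
    have "\<bar>(R ** X)$i$j\<bar> \<le> (\<Sum>k\<in>UNIV. \<bar>X$k$j\<bar>)" for i j
    proof -
    have "\<bar>(R ** X)$i$j\<bar> = \<bar>\<Sum>k\<in>UNIV. R$i$k * X$k$j\<bar>"
      by (simp add: matrix_matrix_mult_def)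
    also have "\<dots> \<le> (\<Sum>k\<in>UNIV. \<bar>R$i$k * X$k$j\<bar>)" by (rule sum_abs)
    also have "\<dots> \<le> (\<Sum>k\<in>UNIV. \<bar>X$k$j\<bar>)"
    proof (intro sum_mono)
      fix k show "\<bar>R$i$k * X$k$j\<bar> \<le> \<bar>X$k$j\<bar>"
        using orth_entry[OF assms, of i k] by (simp add: abs_mult mult_left_le_one_le)
    qed
    finally show ?thesis .
    qed
    then show ?thesis by (intro sum_mono) auto
  qed
  finally show ?thesis .
qed
lemma taylor2:
  fixes W :: "'a::real_normed_vector \<Rightarrow> real"
  assumes dW: "\<And>x. x \<in> U \<Longrightarrow> (W has_derivative blinfun_apply (DW x)) (at x)"
    and dDW: "\<And>x. x \<in> U \<Longrightarrow> (DW has_derivative blinfun_apply (D2W x)) (at x)"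
    and seg: "\<And>t. 0 \<le> t \<Longrightarrow> t \<le> 1 \<Longrightarrow> F + t *\<^sub>R h \<in> U"
  shows "\<exists>t. 0 < t \<and> t < 1 \<and> W (F + h) = W F + DW F h + 1/2 * D2W (F + t *\<^sub>R h) h h"
proof -
  define diff where "diff = (\<lambda>m::nat. if m = 0 then (\<lambda>t::real. W (F + t *\<^sub>R h))
     else if m = 1 then (\<lambda>t. DW (F + t *\<^sub>R h) h) else (\<lambda>t. D2W (F + t *\<^sub>R h) h h))"
  have lin: "((\<lambda>t::real. F + t *\<^sub>R h) has_derivative (\<lambda>s. s *\<^sub>R h)) (at t)" for t
    by (auto intro!: derivative_eq_intros)
  have d1: "((\<lambda>t. W (F + t *\<^sub>R h)) has_real_derivative (DW (F + t *\<^sub>R h) h)) (at t)"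
    if "0 \<le> t" "t \<le> 1" for t
  proof -
    have "((\<lambda>t. W (F + t *\<^sub>R h)) has_derivative (\<lambda>s. DW (F + t *\<^sub>R h) (s *\<^sub>R h))) (at t)"
      using has_derivative_compose[OF lin dW[OF seg[OF that]]] by (simp add: o_def)
    moreover have "(\<lambda>s. DW (F + t *\<^sub>R h) (s *\<^sub>R h)) = (*) (DW (F + t *\<^sub>R h) h)"
      by (simp add: blinfun.scaleR_right fun_eq_iff)
    ultimately show ?thesis unfolding has_field_derivative_def by simp
  qed
  have d2: "((\<lambda>t. DW (F + t *\<^sub>R h) h) has_real_derivative (D2W (F + t *\<^sub>R h) h h)) (at t)"
    if "0 \<le> t" "t \<le> 1" for t
  proof -
    have a: "((\<lambda>t. DW (F + t *\<^sub>R h)) has_derivative (\<lambda>s. D2W (F + t *\<^sub>R h) (s *\<^sub>R h))) (at t)"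
      using has_derivative_compose[OF lin dDW[OF seg[OF that]]] by (simp add: o_def)
    have "((\<lambda>t. blinfun_apply (DW (F + t *\<^sub>R h)) h) has_derivative (\<lambda>s. blinfun_apply (D2W (F + t *\<^sub>R h) (s *\<^sub>R h)) h)) (at t)"
      by (rule bounded_bilinear.FDERIV[OF bounded_bilinear_blinfun_apply a has_derivative_const, simplified])
    moreover have "(\<lambda>s. blinfun_apply (D2W (F + t *\<^sub>R h) (s *\<^sub>R h)) h) = (*) (D2W (F + t *\<^sub>R h) h h)"
      by (simp add: blinfun.scaleR_right blinfun.scaleR_left fun_eq_iff)
    ultimately show ?thesis unfolding has_field_derivative_def by simp
  qed
  have "\<exists>t. 0 < t \<and> t < 1 \<and> diff 0 1 = (\<Sum>m<2. (diff m 0 / fact m) * (1 - 0)^m) + (diff 2 t / fact 2) * (1 - 0)^2"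
    apply (rule Taylor_up[where f="diff 0" and a=0])
    using d1 d2 by (auto simp: diff_def less_2_cases_iff)
  then show ?thesis by (auto simp: diff_def numeral_2_eq_2)
qed

theorem lemma6p3:
  fixes W :: "real^'d^'d \<Rightarrow> real"
    and DW :: "real^'d^'d \<Rightarrow> ((real^'d^'d) \<Rightarrow>\<^sub>L real)"
    and D2W :: "real^'d^'d \<Rightarrow> ((real^'d^'d) \<Rightarrow>\<^sub>L ((real^'d^'d) \<Rightarrow>\<^sub>L real))"
    and \<kappa> \<delta>W :: real and k0 :: 'd
  assumes dim: "CARD('d) \<ge> 2"
    and kappa: "\<kappa> > 0"
    and nonneg: "\<forall>F. W F \<ge> 0"
    and H1: "continuous_on UNIV W"
    and H2: "\<forall>R\<in>SOd. \<forall>F. W (R ** F) = W F"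
    and H3: "W (mat 1) = 0" "W (wellB \<kappa> k0) = 0"
    and H4: "\<exists>c1>0. \<forall>F. W F \<ge> c1 * (infdist F (wells \<kappa> k0))\<^sup>2"
    and H5: "\<delta>W > 0" "C2_on_with {F. infdist F (wells \<kappa> k0) < \<delta>W} W DW D2W"
    and H7: "\<exists>c3. \<forall>F1 F2. \<bar>W F1 - W F2\<bar> \<le> c3 * (1 + norm F1 + norm F2) * norm (F1 - F2)"
  shows "\<exists>C>0. \<exists>C\<delta> \<rho> :: real \<Rightarrow> real.
           (\<forall>\<delta>. 0 < \<delta> \<and> \<delta> \<le> \<delta>W / 2 \<longrightarrow> C\<delta> \<delta> > 0 \<and> \<rho> \<delta> > 0) \<and>
           (\<rho> \<longlongrightarrow> 0) (at_right 0) \<and>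
           (\<forall>\<delta>. 0 < \<delta> \<and> \<delta> \<le> \<delta>W / 2 \<longrightarrow>
              (\<forall>F G. infdist F (wells \<kappa> k0) < \<delta> \<and> norm G < \<delta> \<longrightarrow>
                 W (F + G) \<le> W F + C * sqrt (W F) * norm G
                   + 1/2 * blinfun_apply (blinfun_apply (D2W F) G) G + \<rho> \<delta> * (norm G)\<^sup>2) \<and>
              (\<forall>F G. \<not> (infdist F (wells \<kappa> k0) < \<delta>) \<and> norm G < \<delta> \<longrightarrow>
                 W (F + G) \<le> W F + C\<delta> \<delta> * sqrt (W F) * norm G))"
proof -
  obtain c1 where c1: "c1 > 0" "\<And>F. W F \<ge> c1 * (infdist F (wells \<kappa> k0))\<^sup>2" using H4 by auto
  obtain c3 where c3: "\<And>F1 F2. \<bar>W F1 - W F2\<bar> \<le> c3 * (1 + norm F1 + norm F2) * norm (F1 - F2)"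
    using H7 by auto
  define S where "S = wells \<kappa> k0"
  have Sne: "S \<noteq> {}"
  proof -
    have "rotation_matrix (mat 1 :: real^'d^'d)"
      by (simp add: rotation_matrix_def orthogonal_matrix_id det_I)
    then have "mat 1 ** mat 1 \<in> S" unfolding S_def wells_def SOd_def by blast
    then show ?thesis by blast
  qed
  define M0 where "M0 = (\<Sum>i::'d\<in>UNIV. \<Sum>j\<in>UNIV. \<Sum>k\<in>UNIV. \<bar>(mat 1::real^'d^'d)$k$j\<bar>)
     + (\<Sum>i::'d\<in>UNIV. \<Sum>j\<in>UNIV. \<Sum>k\<in>UNIV. \<bar>wellB \<kappa> k0$k$j\<bar>)"
  have M0a: "(\<Sum>i::'d\<in>UNIV. \<Sum>j\<in>UNIV. \<Sum>k\<in>UNIV. \<bar>(mat 1::real^'d^'d)$k$j\<bar>) \<ge> 0"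
    by (intro sum_nonneg) auto
  have M0b: "(\<Sum>i::'d\<in>UNIV. \<Sum>j\<in>UNIV. \<Sum>k\<in>UNIV. \<bar>wellB \<kappa> k0$k$j\<bar>) \<ge> 0"
    by (intro sum_nonneg) auto
  have M0pos: "M0 \<ge> 0" using M0a M0b M0_def by simp
  have M0: "norm w \<le> M0" if "w \<in> S" for w
  proof -
    from that obtain R where R: "orthogonal_matrix R" "w = R ** mat 1 \<or> w = R ** wellB \<kappa> k0"
      unfolding S_def wells_def SOd_def rotation_matrix_def by blast
    then show ?thesis using orth_mult_bound[OF R(1), of "mat 1"] orth_mult_bound[OF R(1), of "wellB \<kappa> k0"]
      M0a M0b M0_def by auto
  qed
  have nb: "norm F \<le> infdist F S + M0" for F
  proof -
    have "norm F - M0 \<le> infdist F S"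
      unfolding infdist_notempty[OF Sne]
    proof (rule cINF_greatest[OF Sne])
      fix a assume "a \<in> S"
      then have "norm a \<le> M0" by (rule M0)
      moreover have "norm F \<le> dist F a + norm a"
        using norm_triangle_ineq[of "F - a" a] by (simp add: dist_norm)
      ultimately show "norm F - M0 \<le> dist F a" by simp
    qed
    then show ?thesis by simp
  qed
  define U where "U = {F. infdist F S < \<delta>W}"
  have C2: "C2_on_with U W DW D2W" using H5(2) unfolding S_def U_def by simp
  have dW: "\<And>x. x \<in> U \<Longrightarrow> (W has_derivative blinfun_apply (DW x)) (at x)"
    and dDW: "\<And>x. x \<in> U \<Longrightarrow> (DW has_derivative blinfun_apply (D2W x)) (at x)"
    and cD2: "continuous_on U D2W"
    using C2 unfolding C2_on_with_def by auto
  define K where "K = {F. infdist F S \<le> 3*\<delta>W/4}"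
  have KU: "K \<subseteq> U" using H5(1) by (auto simp: K_def U_def)
  have cK: "compact K"
  proof -
    have "closed K" unfolding K_def
      by (intro closed_Collect_le continuous_on_infdist continuous_on_id continuous_on_const)
    moreover have "bounded K" unfolding bounded_iff K_def
      using nb by (intro exI[of _ "3*\<delta>W/4 + M0"]) (smt (verit) mem_Collect_eq)
    ultimately show ?thesis using compact_eq_bounded_closed by blast
  qed
  have cD2K: "continuous_on K D2W" using continuous_on_subset[OF cD2 KU] .
  obtain M where M: "M > 0" "\<And>x. x \<in> K \<Longrightarrow> norm (D2W x) \<le> M"
    using compact_imp_bounded[OF compact_continuous_image[OF cD2K cK]] unfolding bounded_pos by auto
  have cWK: "continuous_on K W" using continuous_on_subset[OF H1] by blast
  obtain B0 where B0: "\<And>x. x \<in> K \<Longrightarrow> norm (W x) \<le> B0"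
    using compact_imp_bounded[OF compact_continuous_image[OF cWK cK]] unfolding bounded_pos by auto
  define B where "B = max 1 B0"
  have B: "B \<ge> 1" "\<And>x. x \<in> K \<Longrightarrow> W x \<le> B"
    using B0 unfolding B_def by (force, smt (verit) real_norm_def)
  have uc: "\<And>e. e > 0 \<Longrightarrow> \<exists>d>0. \<forall>x\<in>K. \<forall>y\<in>K. dist y x < d \<longrightarrow> dist (D2W y) (D2W x) < e"
    using compact_uniformly_continuous[OF cD2K cK] unfolding uniformly_continuous_on_def by metis
  define r where "r = \<delta>W/4"
  have r: "r > 0" using H5(1) r_def by simp
  define C where "C = sqrt B / r + M * r / (2 * sqrt B) + 1"
  have Cpos: "C > 0" using r M B unfolding C_def
    by (smt (verit) divide_nonneg_pos mult_pos_pos real_sqrt_gt_zero zero_less_divide_iff)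
  have bil: "\<bar>blinfun_apply (blinfun_apply A h) h\<bar> \<le> norm A * (norm h)\<^sup>2"
    for A :: "(real^'d^'d) \<Rightarrow>\<^sub>L ((real^'d^'d) \<Rightarrow>\<^sub>L real)" and h
  proof -
    have "\<bar>blinfun_apply (blinfun_apply A h) h\<bar> \<le> norm (blinfun_apply A h) * norm h"
      using norm_blinfun[of "blinfun_apply A h" h] by simp
    also have "\<dots> \<le> norm A * norm h * norm h"
      by (intro mult_right_mono norm_blinfun) auto
    finally show ?thesis by (simp add: power2_eq_square mult.assoc)
  qed
  have tay: "\<exists>t. 0<t \<and> t<1 \<and> F + t *\<^sub>R h \<in> K \<and>
      W (F + h) = W F + DW F h + 1/2 * D2W (F + t *\<^sub>R h) h h"
    if a: "infdist F S \<le> \<delta>W/2" "norm h \<le> \<delta>W/4" for F h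
  proof -
    have seg: "F + t *\<^sub>R h \<in> K" if "0 \<le> t" "t \<le> 1" for t
    proof -
      have "infdist (F + t *\<^sub>R h) S \<le> infdist F S + dist (F + t *\<^sub>R h) F" by (rule infdist_triangle)
      also have "dist (F + t *\<^sub>R h) F = \<bar>t\<bar> * norm h" by (simp add: dist_norm)
      also have "\<bar>t\<bar> * norm h \<le> norm h" using that by (simp add: mult_left_le_one_le)
      finally show ?thesis using a unfolding K_def by simp
    qed
    obtain t where "0<t" "t<1" "W (F + h) = W F + DW F h + 1/2 * D2W (F + t *\<^sub>R h) h h"
      using taylor2[of U W DW D2W F h] dW dDW seg KU by blast
    then show ?thesis using seg[of t] by auto
  qed
  have grad: "DW F G \<le> C * sqrt (W F) * norm G" if F: "infdist F S \<le> \<delta>W/2" for F G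
  proof (cases "G = 0")
    case True then show ?thesis by simp
  next
    case False
    then have nG: "norm G > 0" by simp
    have FK: "F \<in> K" using F H5(1) by (simp add: K_def)
    have key: "DW F G \<le> norm G * (W F / s + M * s / 2)" if s: "0 < s" "s \<le> r" for s
    proof -
      define h where "h = (- s / norm G) *\<^sub>R G"
      have nh: "norm h = s" using s nG by (simp add: h_def)
      have "norm h \<le> \<delta>W/4" using s nh r_def by simp
      then obtain t where t: "F + t *\<^sub>R h \<in> K"
         "W (F + h) = W F + DW F h + 1/2 * D2W (F + t *\<^sub>R h) h h" using tay[OF F] by blast
      have "D2W (F + t *\<^sub>R h) h h \<le> norm (D2W (F + t *\<^sub>R h)) * (norm h)\<^sup>2"
        using bil[of "D2W (F + t *\<^sub>R h)" h] by simp
      also have "\<dots> \<le> M * s\<^sup>2" using M(2)[OF t(1)] nh by (simp add: mult_right_mono)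
      finally have d2: "D2W (F + t *\<^sub>R h) h h \<le> M * s\<^sup>2" .
      have d1: "DW F h = (- s / norm G) * DW F G" by (simp add: h_def blinfun.scaleR_right blinfun.minus_right)
      have "0 \<le> W (F + h)" using nonneg by simp
      then have "(s / norm G) * DW F G \<le> W F + M * s\<^sup>2 / 2" using t(2) d1 d2 by simp
      then have "norm G / s * ((s / norm G) * DW F G) \<le> norm G / s * (W F + M * s\<^sup>2 / 2)"
        using s nG by (intro mult_left_mono) auto
      moreover have "norm G / s * ((s / norm G) * DW F G) = DW F G" using s nG by simp
      moreover have "norm G / s * (W F + M * s\<^sup>2 / 2) = norm G * (W F / s + M * s / 2)"
        using s by (simp add: field_simps power2_eq_square)
      ultimately show ?thesis by simp
    qed
    show ?thesis
    proof (cases "W F = 0")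
      case True
      show ?thesis
      proof (rule ccontr)
        assume "\<not> ?thesis"
        then have a: "DW F G > 0" using True by simp
        define s where "s = min r (DW F G / (norm G * M))"
        have s0: "0 < s" "s \<le> r" using r a nG M by (auto simp: s_def)
        have "DW F G \<le> norm G * (M * s / 2)" using key[OF s0] True by simp
        also have "\<dots> = (norm G * M * s) / 2" by simp
        finally have h1: "DW F G \<le> (norm G * M * s) / 2" .
        have "norm G * M * s \<le> DW F G"
        proof -
          have "s \<le> DW F G / (norm G * M)" by (simp add: s_def)
          then have "(norm G * M) * s \<le> (norm G * M) * (DW F G / (norm G * M))"
            using nG M by (intro mult_left_mono) auto
          then show ?thesis using nG M by simp
        qed
        then show False using a h1 by simp
      qed
    next
      case False
      then have w: "W F > 0" using nonneg by (metis less_eq_real_def)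
      have wB: "W F \<le> B" using B(2) FK by simp
      define q where "q = sqrt (W F)"
      define b where "b = sqrt B"
      have q: "q > 0" "q\<^sup>2 = W F" using w by (auto simp: q_def)
      have b: "b > 0" "b\<^sup>2 = B" using B by (auto simp: b_def)
      have qb: "q \<le> b" using wB by (simp add: q_def b_def)
      define s where "s = r * q / b"
      have s0: "0 < s" "s \<le> r" using q b r qb by (auto simp: s_def field_simps)
      have "W F / s + M * s / 2 = q * (b / r + M * r / (2 * b))"
        using q b r unfolding s_def by (simp add: field_simps power2_eq_square)
      also have "\<dots> \<le> q * C" using q unfolding C_def b_def by simp
      finally have "DW F G \<le> norm G * (q * C)" using key[OF s0] nG
        by (smt (verit) mult_left_mono norm_ge_zero)
      then show ?thesis by (simp add: q_def mult_ac)
    qed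
  qed
  have eps: "\<exists>\<eta>>0. \<forall>F G. infdist F S \<le> \<delta>W/2 \<and> norm G < \<eta> \<longrightarrow>
      W (F + G) \<le> W F + C * sqrt (W F) * norm G + 1/2 * D2W F G G + e * (norm G)\<^sup>2"
    if e: "e > 0" for e
  proof -
    obtain d where d: "d > 0" "\<forall>x\<in>K. \<forall>y\<in>K. dist y x < d \<longrightarrow> dist (D2W y) (D2W x) < 2*e"
      using uc[of "2*e"] e by auto
    define \<eta> where "\<eta> = min d (\<delta>W/4)"
    show ?thesis
    proof (intro exI[of _ \<eta>] conjI allI impI)
      show "\<eta> > 0" using d H5(1) by (simp add: \<eta>_def)
      fix F G :: "real^'d^'d" assume a: "infdist F S \<le> \<delta>W/2 \<and> norm G < \<eta>"
      have FK: "F \<in> K" using a H5(1) by (simp add: K_def)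
      have "norm G \<le> \<delta>W/4" using a by (simp add: \<eta>_def)
      then obtain t where t: "0<t" "t<1" "F + t *\<^sub>R G \<in> K"
        "W (F + G) = W F + DW F G + 1/2 * D2W (F + t *\<^sub>R G) G G" using tay[of F G] a by blast
      have "dist (F + t *\<^sub>R G) F = t * norm G" using t by (simp add: dist_norm)
      also have "\<dots> \<le> norm G" using t by (simp add: mult_left_le_one_le)
      also have "\<dots> < d" using a by (simp add: \<eta>_def)
      finally have "dist (D2W (F + t *\<^sub>R G)) (D2W F) < 2*e" using d(2) FK t(3) by blast
      then have dd: "norm (D2W (F + t *\<^sub>R G) - D2W F) \<le> 2*e" by (simp add: dist_norm)
      have "D2W (F + t *\<^sub>R G) G G - D2W F G G = (D2W (F + t *\<^sub>R G) - D2W F) G G"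
        by (simp add: blinfun.diff_left)
      also have "\<dots> \<le> norm (D2W (F + t *\<^sub>R G) - D2W F) * (norm G)\<^sup>2"
        using bil[of "D2W (F + t *\<^sub>R G) - D2W F" G] by simp
      also have "\<dots> \<le> 2*e * (norm G)\<^sup>2" using dd by (simp add: mult_right_mono)
      finally have h2: "D2W (F + t *\<^sub>R G) G G - D2W F G G \<le> 2*e * (norm G)\<^sup>2" .
      have "DW F G \<le> C * sqrt (W F) * norm G" using grad a by simp
      then show "W (F + G) \<le> W F + C * sqrt (W F) * norm G + 1/2 * D2W F G G + e * (norm G)\<^sup>2"
        using t(4) h2 by simp
    qed
  qed
  define L where "L = \<bar>c3\<bar> * (1 + 2 * (\<delta>W/2 + M0) + \<delta>W/2)"
  have Lpos: "L \<ge> 0" using M0pos H5(1) by (simp add: L_def)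
  have lip: "W (F + G) - W F \<le> \<bar>c3\<bar> * (1 + 2 * norm F + norm G) * norm G" for F G
  proof -
    have "W (F + G) - W F \<le> c3 * (1 + norm (F + G) + norm F) * norm G"
      using c3[of "F + G" F] by simp
    also have "\<dots> \<le> \<bar>c3\<bar> * (1 + norm (F + G) + norm F) * norm G"
      by (intro mult_right_mono) auto
    also have "\<dots> \<le> \<bar>c3\<bar> * (1 + 2 * norm F + norm G) * norm G"
      using norm_triangle_ineq[of F G] by (intro mult_right_mono mult_left_mono) auto
    finally show ?thesis .
  qed
  have big: "W (F + G) \<le> W F + C * sqrt (W F) * norm G + 1/2 * D2W F G G + (L/\<eta> + M) * (norm G)\<^sup>2"
    if a: "\<eta> > 0" "infdist F S \<le> \<delta>W/2" "norm G < \<delta>W/2" "norm G \<ge> \<eta>" for \<eta> F G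
  proof -
    have FK: "F \<in> K" using a H5(1) by (simp add: K_def)
    have "1 + 2 * norm F + norm G \<le> 1 + 2 * (\<delta>W/2 + M0) + \<delta>W/2"
      using nb[of F] a by simp
    then have "\<bar>c3\<bar> * (1 + 2 * norm F + norm G) * norm G \<le> L * norm G"
      unfolding L_def by (intro mult_right_mono mult_left_mono) auto
    then have l1: "W (F + G) - W F \<le> L * norm G" using lip[of F G] by simp
    have "L * norm G = L / \<eta> * (\<eta> * norm G)" using a by simp
    also have "\<dots> \<le> L / \<eta> * (norm G * norm G)"
      using a Lpos by (intro mult_left_mono mult_right_mono) auto
    finally have l2: "L * norm G \<le> L / \<eta> * (norm G)\<^sup>2" by (simp add: power2_eq_square)
    have "- (D2W F G G) \<le> norm (D2W F) * (norm G)\<^sup>2" using bil[of "D2W F" G] by simp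
    also have "\<dots> \<le> M * (norm G)\<^sup>2" using M(2)[OF FK] by (simp add: mult_right_mono)
    finally have l3: "- (D2W F G G) \<le> M * (norm G)\<^sup>2" .
    have l4: "0 \<le> C * sqrt (W F) * norm G" using Cpos nonneg by simp
    have l5: "(L/\<eta> + M) * (norm G)\<^sup>2 = L/\<eta> * (norm G)\<^sup>2 + M * (norm G)\<^sup>2"
      by (simp add: distrib_right)
    have l6: "0 \<le> M * (norm G)\<^sup>2" using M(1) by simp
    show ?thesis using l1 l2 l3 l4 l5 l6 by linarith
  qed
  define P where "P = (\<lambda>\<delta> \<rho>. \<forall>F G. infdist F S < \<delta> \<and> norm G < \<delta> \<longrightarrow>
      W (F + G) \<le> W F + C * sqrt (W F) * norm G + 1/2 * D2W F G G + \<rho> * (norm G)\<^sup>2)"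
  have Pmono: "P \<delta> b" if "P \<delta> a" "a \<le> b" for \<delta> a b
  proof -
    have "a * (norm G)\<^sup>2 \<le> b * (norm G)\<^sup>2" for G :: "real^'d^'d"
      using that(2) by (simp add: mult_right_mono)
    then show ?thesis using that(1) unfolding P_def by (meson order_trans add_left_mono)
  qed
  obtain \<eta>1 where \<eta>1: "\<eta>1 > 0" "\<forall>F G. infdist F S \<le> \<delta>W/2 \<and> norm G < \<eta>1 \<longrightarrow>
      W (F + G) \<le> W F + C * sqrt (W F) * norm G + 1/2 * D2W F G G + 1 * (norm G)\<^sup>2"
    using eps[of 1] by auto
  have Pex: "P \<delta> (max 1 (L/\<eta>1 + M))" if "0 < \<delta>" "\<delta> \<le> \<delta>W/2" for \<delta>
    unfolding P_def
  proof (intro allI impI)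
    fix F G :: "real^'d^'d" assume a: "infdist F S < \<delta> \<and> norm G < \<delta>"
    have sq: "0 \<le> (norm G)\<^sup>2" by simp
    show "W (F + G) \<le> W F + C * sqrt (W F) * norm G + 1/2 * D2W F G G + max 1 (L/\<eta>1 + M) * (norm G)\<^sup>2"
    proof (cases "norm G < \<eta>1")
      case True
      then have "W (F + G) \<le> W F + C * sqrt (W F) * norm G + 1/2 * D2W F G G + 1 * (norm G)\<^sup>2"
        using \<eta>1(2) a that by auto
      moreover have "1 * (norm G)\<^sup>2 \<le> max 1 (L/\<eta>1 + M) * (norm G)\<^sup>2"
        using sq by (intro mult_right_mono) auto
      ultimately show ?thesis by linarith
    next
      case False
      then have "W (F + G) \<le> W F + C * sqrt (W F) * norm G + 1/2 * D2W F G G + (L/\<eta>1 + M) * (norm G)\<^sup>2"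
        using big[of \<eta>1 F G] \<eta>1(1) a that by auto
      moreover have "(L/\<eta>1 + M) * (norm G)\<^sup>2 \<le> max 1 (L/\<eta>1 + M) * (norm G)\<^sup>2"
        using sq by (intro mult_right_mono) auto
      ultimately show ?thesis by linarith
    qed
  qed
  define \<rho> where "\<rho> = (\<lambda>\<delta>. Inf {r. r > 0 \<and> P \<delta> r} + \<delta>)"
  have bdd: "bdd_below {r. r > 0 \<and> P \<delta> r}" for \<delta>
    by (rule bdd_belowI[of _ 0]) auto
  have \<rho>: "\<rho> \<delta> > 0 \<and> P \<delta> (\<rho> \<delta>)" if d: "0 < \<delta>" "\<delta> \<le> \<delta>W/2" for \<delta>
  proof -
    let ?A = "{r. r > 0 \<and> P \<delta> r}"
    have ne: "?A \<noteq> {}" using Pex[OF d] by (intro ex_in_conv[THEN iffD1] exI[of _ "max 1 (L/\<eta>1 + M)"]) auto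
    have "Inf ?A \<ge> 0" by (rule cInf_greatest[OF ne]) auto
    then have pos: "\<rho> \<delta> > 0" using d by (simp add: \<rho>_def)
    have "Inf ?A < \<rho> \<delta>" using d by (simp add: \<rho>_def)
    then obtain x where "x \<in> ?A" "x < \<rho> \<delta>" using cInf_less_iff[OF ne bdd] by auto
    then show ?thesis using Pmono pos by auto
  qed
  have \<rho>lim: "(\<rho> \<longlongrightarrow> 0) (at_right 0)"
  proof (rule tendstoI)
    fix e :: real assume e: "e > 0"
    obtain \<eta> where \<eta>: "\<eta> > 0" "\<forall>F G. infdist F S \<le> \<delta>W/2 \<and> norm G < \<eta> \<longrightarrow>
      W (F + G) \<le> W F + C * sqrt (W F) * norm G + 1/2 * D2W F G G + e/2 * (norm G)\<^sup>2"
      using eps[of "e/2"] e by auto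
    show "eventually (\<lambda>\<delta>. dist (\<rho> \<delta>) 0 < e) (at_right 0)"
      unfolding eventually_at_right_field
    proof (intro exI[of _ "min (min \<eta> (\<delta>W/2)) (e/2)"] conjI allI impI)
      show "0 < min (min \<eta> (\<delta>W/2)) (e/2)" using \<eta> e H5(1) by simp
      fix \<delta> :: real assume d: "0 < \<delta>" "\<delta> < min (min \<eta> (\<delta>W/2)) (e/2)"
      have "P \<delta> (e/2)" unfolding P_def using \<eta>(2) d by auto
      then have "Inf {r. r > 0 \<and> P \<delta> r} \<le> e/2" using e by (intro cInf_lower[OF _ bdd]) auto
      then have "\<rho> \<delta> < e" using d by (simp add: \<rho>_def)
      moreover have "\<rho> \<delta> > 0" using \<rho>[of \<delta>] d by simp
      ultimately show "dist (\<rho> \<delta>) 0 < e" by simp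
    qed
  qed
  define Cd where "Cd = (\<lambda>\<delta>::real. \<bar>c3\<bar> * ((1 + 2*M0 + \<delta>)/\<delta> + 2) / sqrt c1 + 1)"
  have Cdpos: "Cd \<delta> > 0" if "\<delta> > 0" for \<delta>
    using that c1(1) M0pos unfolding Cd_def by (simp add: add_nonneg_pos)
  have part2: "W (F + G) \<le> W F + Cd \<delta> * sqrt (W F) * norm G"
    if a: "0 < \<delta>" "\<not> infdist F S < \<delta>" "norm G < \<delta>" for \<delta> F G
  proof -
    define d where "d = infdist F S"
    have dd: "d \<ge> \<delta>" using a by (simp add: d_def)
    have "c1 * d\<^sup>2 \<le> W F" using c1(2)[of F] by (simp add: d_def S_def)
    then have "sqrt (c1 * d\<^sup>2) \<le> sqrt (W F)" by (rule real_sqrt_le_mono)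
    then have sq: "sqrt c1 * d \<le> sqrt (W F)" using dd a by (simp add: real_sqrt_mult)
    define Q where "Q = (1 + 2*M0 + \<delta>)/\<delta> + 2"
    have "1 + 2 * norm F + norm G \<le> 1 + 2*(d + M0) + \<delta>" using nb[of F] a by (simp add: d_def)
    also have "\<dots> = (1 + 2*M0 + \<delta>) * 1 + 2 * d" by simp
    also have "\<dots> \<le> (1 + 2*M0 + \<delta>) * (d / \<delta>) + 2 * d"
      using dd a M0pos by (intro add_right_mono mult_left_mono) auto
    also have "\<dots> = Q * d" using a by (simp add: Q_def field_simps)
    finally have q1: "1 + 2 * norm F + norm G \<le> Q * d" .
    have Qpos: "Q \<ge> 0" using a M0pos by (simp add: Q_def)
    have "\<bar>c3\<bar> * Q * d = (\<bar>c3\<bar> * Q / sqrt c1) * (sqrt c1 * d)" using c1(1) by simp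
    also have "\<dots> \<le> (\<bar>c3\<bar> * Q / sqrt c1) * sqrt (W F)"
      using sq Qpos c1(1) by (intro mult_left_mono) auto
    also have "\<dots> \<le> Cd \<delta> * sqrt (W F)" unfolding Cd_def Q_def[symmetric]
      using nonneg by (intro mult_right_mono) auto
    finally have q2: "\<bar>c3\<bar> * Q * d \<le> Cd \<delta> * sqrt (W F)" .
    have "W (F + G) - W F \<le> \<bar>c3\<bar> * (1 + 2 * norm F + norm G) * norm G" by (rule lip)
    also have "\<dots> \<le> \<bar>c3\<bar> * (Q * d) * norm G"
      using q1 by (intro mult_right_mono mult_left_mono) auto
    also have "\<dots> \<le> Cd \<delta> * sqrt (W F) * norm G"
      using q2 by (intro mult_right_mono) (auto simp: mult.assoc)
    finally show ?thesis by simp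
  qed
  have final: "C > 0 \<and> (\<forall>\<delta>. 0 < \<delta> \<and> \<delta> \<le> \<delta>W / 2 \<longrightarrow> Cd \<delta> > 0 \<and> \<rho> \<delta> > 0) \<and>
           (\<rho> \<longlongrightarrow> 0) (at_right 0) \<and>
           (\<forall>\<delta>. 0 < \<delta> \<and> \<delta> \<le> \<delta>W / 2 \<longrightarrow>
              (\<forall>F G. infdist F S < \<delta> \<and> norm G < \<delta> \<longrightarrow>
                 W (F + G) \<le> W F + C * sqrt (W F) * norm G
                   + 1/2 * blinfun_apply (blinfun_apply (D2W F) G) G + \<rho> \<delta> * (norm G)\<^sup>2) \<and>
              (\<forall>F G. \<not> (infdist F S < \<delta>) \<and> norm G < \<delta> \<longrightarrow>
                 W (F + G) \<le> W F + Cd \<delta> * sqrt (W F) * norm G))"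
    using Cpos Cdpos \<rho> \<rho>lim part2 unfolding P_def by blast
  show ?thesis using final unfolding S_def by blast
qed

end
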